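(* In the setting described in the context, for any $s\in\{1,\dots,T\}$, any $k\in\{1,\dots,K\}$ and any $0<\beta<1$, $$\mathbb{P}\left(\frac{(v^*_{ks})^2}{\sum_{t\neq s}(v^*_{kt})^2}\ge\frac{1}{T^\beta}\right)\le\frac{T^\beta+1}{T}.$$
   Context: Fixed inputs $\mathbf{x}_1,\dots,\mathbf{x}_N\in\mathbb{R}^d$. Networks $f_\theta(\mathbf{x})=\sum_{k=1}^K\mathbf{v}_k(\mathbf{w}_k^\top\mathbf{x}+b_k)_+$ with $\mathbf{w}_k\in\mathbb{S}^{d-1}$, $b_k\in\mathbb{R}$, $\mathbf{v}_k\in\mathbb{R}^T$, $K\ge N^2$. Training problem: $\min_\theta\sum_{i=1}^N\mathcal{L}(\mathbf{y}_i,f_\theta(\mathbf{x}_i))+\lambda\sum_{k=1}^K\|\mathbf{v}_k\|_2$, $\lambda>0$, with loss separable across tasks and lower semicontinuous in its second argument. The task label vectors $\mathbf{y}_{\cdot,t}$, $t=1,\dots,T$, are exchangeable random vectors, and the optimal output weights $\mathbf{v}_k^*=(v^*_{k1},\dots,v^*_{kT})$ are given by a measurable deterministic permutation-invariant selection map of the labels (permuting the $T$ label coordinates permutes the coordinates of all selected $\mathbf{v}_k^*$ identically). The ratio is $[0,\infty]$-valued: $\infty$ iff the denominator is $0$ and the numerator nonzero, and $0$ if both are $0$. *)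

theory Defs
  imports "HOL-Analysis.Analysis" "HOL-Probability.Probability"
begin

definition lsc_fun :: "(real \<Rightarrow> ereal) \<Rightarrow> bool" where
  "lsc_fun g \<longleftrightarrow> (\<forall>x. \<forall>c. c < g x \<longrightarrow> (\<forall>\<^sub>F z in at x. c < g z))"

definition relu_net ::
  "real^'d^'k \<Rightarrow> real^'k \<Rightarrow> real^'T^'k \<Rightarrow> real^'d \<Rightarrow> real^'T" where
  "relu_net W B V x = (\<Sum>k\<in>UNIV. max 0 (W $ k \<bullet> x + B $ k) *\<^sub>R V $ k)"

(* training objective; the loss L(y, yhat) = sum_t l(y_t, yhat_t) is separable across tasks *)
definition train_obj ::
  "('n \<Rightarrow> real^'d) \<Rightarrow> (real \<Rightarrow> real \<Rightarrow> ereal) \<Rightarrow> real \<Rightarrow> real^'T^'n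
     \<Rightarrow> real^'d^'k \<Rightarrow> real^'k \<Rightarrow> real^'T^'k \<Rightarrow> ereal" where
  "train_obj x l lam Y W B V =
     (\<Sum>i\<in>UNIV. \<Sum>t\<in>UNIV. l (Y $ i $ t) (relu_net W B V (x i) $ t))
     + ereal (lam * (\<Sum>k\<in>UNIV. norm (V $ k)))"

definition ratio :: "real \<Rightarrow> real \<Rightarrow> ereal" where
  "ratio a b = (if b = 0 then (if a = 0 then 0 else \<infinity>) else ereal (a / b))"

end

theory Submission
  imports Defs
begin

lemma nth2_meas: "(\<lambda>Z::real^'a::finite^'b::finite. Z $ j $ t) \<in> borel_measurable borel"
  by (intro borel_measurable_continuous_onI continuous_on_component continuous_on_id)

lemma perm_meas: "(\<lambda>Z::real^'a::finite^'b::finite. \<chi> i u. Z $ i $ g u) \<in> borel_measurable borel"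
  by (intro borel_measurable_continuous_onI continuous_on_vec_lambda continuous_on_component continuous_on_id)

lemma card_bound:
  fixes a :: "'T::finite \<Rightarrow> real" and c :: real
  assumes nn: "\<And>t. a t \<ge> 0" and c: "c > 0"
  shows "real (card {t. a t > 0 \<and> c * a t \<ge> (\<Sum>u\<in>UNIV. a u)}) \<le> c"
proof -
  let ?F = "{t. a t > 0 \<and> c * a t \<ge> (\<Sum>u\<in>UNIV. a u)}"
  let ?S = "\<Sum>u\<in>UNIV. a u"
  show ?thesis
  proof (cases "?F = {}")
    case True
    have "real (card ?F) = 0" by (subst True) simp
    with c show ?thesis by linarith
  next
    case False
    then obtain t0 where "t0 \<in> ?F" by blast
    have "?S \<ge> a t0" using nn by (intro member_le_sum) auto
    with \<open>t0 \<in> ?F\<close> have Spos: "?S > 0" by auto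
    have "real (card ?F) * (?S / c) = (\<Sum>t\<in>?F. ?S / c)" by simp
    also have "\<dots> \<le> (\<Sum>t\<in>?F. a t)"
      using c by (intro sum_mono) (auto simp: field_simps)
    also have "\<dots> \<le> ?S" using nn by (intro sum_mono2) auto
    finally have "real (card ?F) * (?S / c) \<le> ?S" .
    then have "real (card ?F) * ?S \<le> c * ?S" using c by (simp add: field_simps)
    then show ?thesis using Spos by simp
  qed
qed

theorem lemma4:
  fixes M :: "'w measure"
    and x :: "'n::finite \<Rightarrow> real^'d::finite"
    and l :: "real \<Rightarrow> real \<Rightarrow> ereal"
    and lam :: real
    and Y :: "'w \<Rightarrow> real^'T::finite^'n"
    and sel :: "real^'T^'n \<Rightarrow> (real^'d^'k::finite) \<times> (real^'k) \<times> (real^'T^'k)"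
    and s :: 'T and k :: 'k and \<beta> :: real
  assumes "prob_space M"
    and K_ge: "CARD('k) \<ge> CARD('n)^2"
    and lam_pos: "lam > 0"
    and l_lsc: "\<And>y. lsc_fun (l y)"
    and Y_meas: "Y \<in> borel_measurable M"
    and exch: "\<And>\<sigma>. \<sigma> permutes (UNIV :: 'T set) \<Longrightarrow>
        distr M borel (\<lambda>\<omega>. \<chi> i t. Y \<omega> $ i $ \<sigma> t) = distr M borel Y"
    and sel_meas: "(\<lambda>Z. snd (snd (sel Z))) \<in> borel_measurable borel"
    and sel_equiv: "\<And>\<sigma> Z. \<sigma> permutes (UNIV :: 'T set) \<Longrightarrow>
        snd (snd (sel (\<chi> i t. Z $ i $ \<sigma> t))) = (\<chi> j t. snd (snd (sel Z)) $ j $ \<sigma> t)"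
    and sel_sphere: "\<And>Z j. norm (fst (sel Z) $ j) = 1"
    and sel_opt: "\<And>Z (W :: real^'d^'k) (B :: real^'k) (V :: real^'T^'k). (\<forall>j. norm (W $ j) = 1) \<Longrightarrow>
        train_obj x l lam Z (fst (sel Z)) (fst (snd (sel Z))) (snd (snd (sel Z)))
          \<le> train_obj x l lam Z W B V"
    and "0 < \<beta>" and "\<beta> < 1"
  shows "measure M {\<omega> \<in> space M.
           ratio ((snd (snd (sel (Y \<omega>))) $ k $ s)^2)
                 (\<Sum>t\<in>UNIV - {s}. (snd (snd (sel (Y \<omega>))) $ k $ t)^2)
             \<ge> ereal (1 / real CARD('T) powr \<beta>)}
         \<le> (real CARD('T) powr \<beta> + 1) / real CARD('T)"
proof -
  interpret P: prob_space M by fact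
  define V where "V = (\<lambda>Z. snd (snd (sel Z)))"
  define T where "T = real CARD('T)"
  define p where "p = T powr \<beta>"
  define c where "c = p + 1"
  have T1: "T \<ge> 1" unfolding T_def by simp
  have ppos: "p > 0" unfolding p_def using T1 by simp
  have cpos: "c > 0" unfolding c_def using ppos by simp
  define Pr where "Pr = (\<lambda>t Z. (V Z $ k $ t)^2 > 0 \<and> c * (V Z $ k $ t)^2 \<ge> (\<Sum>u\<in>UNIV. (V Z $ k $ u)^2))"
  define A where "A = (\<lambda>t. {\<omega> \<in> space M. Pr t (Y \<omega>)})"
  have Vm: "(\<lambda>Z. V Z $ k $ t) \<in> borel_measurable borel" for t
    using measurable_comp[OF sel_meas nth2_meas[of k t]] unfolding V_def o_def .
  have Prm: "{Z \<in> space borel. Pr t Z} \<in> sets borel" for t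
    unfolding Pr_def using Vm by measurable
  have Am: "A t \<in> sets M" for t
  proof -
    have "A t = Y -` {Z \<in> space borel. Pr t Z} \<inter> space M" unfolding A_def by auto
    then show ?thesis using measurable_sets[OF Y_meas Prm] by simp
  qed
  have Ai: "integrable M (indicator (A t) :: 'w \<Rightarrow> real)" for t
    using Am[of t] by (intro integrable_real_indicator) (auto simp: P.emeasure_finite less_top[symmetric])
  have eq: "{\<omega> \<in> space M.
           ratio ((snd (snd (sel (Y \<omega>))) $ k $ s)^2)
                 (\<Sum>t\<in>UNIV - {s}. (snd (snd (sel (Y \<omega>))) $ k $ t)^2)
             \<ge> ereal (1 / real CARD('T) powr \<beta>)} = A s"
  proof -
    have "ratio a D \<ge> ereal (1 / p) \<longleftrightarrow> a > 0 \<and> c * a \<ge> a + D"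
      if a: "a \<ge> 0" and D: "D \<ge> 0" for a D
    proof (cases "D = 0")
      case True
      then show ?thesis using a ppos by (auto simp: ratio_def c_def field_simps)
    next
      case False
      then have Dp: "D > 0" using D by simp
      have "ratio a D \<ge> ereal (1 / p) \<longleftrightarrow> a / D \<ge> 1 / p" using False by (simp add: ratio_def)
      also have "\<dots> \<longleftrightarrow> a * p \<ge> D" using Dp ppos by (simp add: field_simps)
      also have "\<dots> \<longleftrightarrow> a > 0 \<and> c * a \<ge> a + D"
      proof -
        have e1: "a + D \<le> c * a \<longleftrightarrow> D \<le> a * p" unfolding c_def by (simp add: algebra_simps)
        have e2: "D \<le> a * p \<Longrightarrow> a > 0" using Dp a by (cases "a = 0") auto
        show ?thesis using e1 e2 by blast
      qed
      finally show ?thesis .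
    qed
    moreover have "(\<Sum>u\<in>UNIV. (V Z $ k $ u)^2) = (V Z $ k $ s)^2 + (\<Sum>t\<in>UNIV - {s}. (V Z $ k $ t)^2)" for Z
      by (simp add: sum.remove[of UNIV s])
    ultimately show ?thesis
      unfolding A_def Pr_def p_def T_def V_def
      by (auto simp: sum_nonneg)
  qed
  have same: "measure M (A t) = measure M (A s)" for t
  proof -
    define \<sigma> where "\<sigma> = Transposition.transpose s t"
    have sp: "\<sigma> permutes UNIV" unfolding \<sigma>_def by (rule permutes_swap_id) auto
    define g where "g = (\<lambda>Z::real^'T^'n. \<chi> i u. Z $ i $ \<sigma> u)"
    have gm: "g \<in> borel_measurable borel" unfolding g_def by (rule perm_meas)
    have Y'm: "(\<lambda>\<omega>. g (Y \<omega>)) \<in> borel_measurable M"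
      using measurable_comp[OF Y_meas gm] by (simp add: o_def)
    have Vg: "V (g Z) $ k $ u = V Z $ k $ \<sigma> u" for Z u
      unfolding V_def g_def using sel_equiv[OF sp, of Z] by simp
    have sumg: "(\<Sum>u\<in>UNIV. (V Z $ k $ \<sigma> u)^2) = (\<Sum>u\<in>UNIV. (V Z $ k $ u)^2)" for Z
      using sum.permute[OF sp, of "\<lambda>u. (V Z $ k $ u)^2"] by (simp add: o_def)
    have PrG: "Pr s (g Z) = Pr t Z" for Z
      unfolding Pr_def Vg sumg by (simp add: \<sigma>_def)
    have "measure M (A t) = measure M ((\<lambda>\<omega>. g (Y \<omega>)) -` {Z \<in> space borel. Pr s Z} \<inter> space M)"
      unfolding A_def using PrG by (intro arg_cong[where f="measure M"]) auto
    also have "\<dots> = measure (distr M borel (\<lambda>\<omega>. g (Y \<omega>))) {Z \<in> space borel. Pr s Z}"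
      by (rule measure_distr[symmetric, OF Y'm Prm])
    also have "distr M borel (\<lambda>\<omega>. g (Y \<omega>)) = distr M borel Y"
      unfolding g_def by (rule exch[OF sp])
    also have "measure (distr M borel Y) {Z \<in> space borel. Pr s Z} = measure M (Y -` {Z \<in> space borel. Pr s Z} \<inter> space M)"
      by (rule measure_distr[OF Y_meas Prm])
    also have "\<dots> = measure M (A s)"
      unfolding A_def by (intro arg_cong[where f="measure M"]) auto
    finally show ?thesis .
  qed
  have "T * measure M (A s) = (\<Sum>t\<in>UNIV. measure M (A t))"
  proof -
    have "(\<Sum>t\<in>UNIV. measure M (A t)) = (\<Sum>t\<in>(UNIV::'T set). measure M (A s))"
      by (rule sum.cong[OF refl same])
    then show ?thesis by (simp add: T_def)
  qed
  also have "\<dots> = (\<Sum>t\<in>UNIV. integral\<^sup>L M (indicator (A t)))"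
    using Am by (simp add: Int_absorb2 sets.sets_into_space)
  also have "\<dots> = integral\<^sup>L M (\<lambda>\<omega>. \<Sum>t\<in>UNIV. indicator (A t) \<omega> :: real)"
    by (subst Bochner_Integration.integral_sum) (use Ai in auto)
  also have "\<dots> \<le> integral\<^sup>L M (\<lambda>\<omega>. c)"
  proof (rule integral_mono)
    show "integrable M (\<lambda>\<omega>. \<Sum>t\<in>UNIV. indicator (A t) \<omega> :: real)" by (intro Bochner_Integration.integrable_sum Ai)
    show "integrable M (\<lambda>\<omega>. c)" by simp
    fix \<omega> assume w: "\<omega> \<in> space M"
    have "(\<Sum>t\<in>UNIV. indicator (A t) \<omega> :: real) = real (card {t. Pr t (Y \<omega>)})"
      using w by (simp add: indicator_def A_def sum.If_cases)
    also have "\<dots> \<le> c" unfolding Pr_def by (rule card_bound[OF _ cpos]) simp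
    finally show "(\<Sum>t\<in>UNIV. indicator (A t) \<omega> :: real) \<le> c" .
  qed
  also have "\<dots> = c" by (simp add: P.prob_space)
  finally have "T * measure M (A s) \<le> c" .
  then have "measure M (A s) \<le> c / T" using T1 by (simp add: field_simps)
  then show ?thesis unfolding eq c_def p_def T_def .
qed

end
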